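(* For each $k > 0$ there is a comonad in Kleisli form $(\mathbb{H}_{k}, \varepsilon, (\cdot)^* )$ on $\mathsf{HGraph}$, given by restricting focussed plays to hyperedges of size at most $k$.
   Context: $\mathsf{HGraph}$ is the category of hypergraphs $(V,E)$ ($E$ a family of finite subsets of $V$) and maps sending hyperedges to hyperedges. The hypergraph comonad $\mathbb{H}$: vertices of $\mathbb{H}(V,E)$ are equivalence classes $[p,a]$ of focussed plays $\langle p,a\rangle$ ($p=[U_1,\ldots,U_n]$ a non-empty list of hyperedges, $a\in U_n$), where $\langle p,a\rangle\sim\langle q,a'\rangle$ iff $a=a'$, $p\sqcap q$ non-empty, and $a$ lies in the last hyperedge of every play on the prefix-order paths from $p\sqcap q$ to $p$ and $q$; hyperedges are $\{[p,a]\mid a\in U\}$ with $U\in E$ the last element of $p$. Counit $\varepsilon([p,a])=a$; coextension $h^*([[U_1,\ldots,U_n],a])=[[V_1,\ldots,V_n],h([[U_1,\ldots,U_n],a])]$ with $V_j=\{h([[U_1,\ldots,U_j],b])\mid b\in U_j\}$. *)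

theory Defs
  imports Main "HOL-Library.Sublist"
begin

type_synonym 'v hgraph = "'v set \<times> 'v set set"

definition hypergraph :: "'v hgraph \<Rightarrow> bool" where
  "hypergraph G \<longleftrightarrow> (\<forall>U\<in>snd G. finite U \<and> U \<subseteq> fst G)"

text \<open>Morphisms of HGraph: maps on vertices sending hyperedges to hyperedges
  (functions are only considered on the vertex set).\<close>
definition hmor :: "'v hgraph \<Rightarrow> 'w hgraph \<Rightarrow> ('v \<Rightarrow> 'w) \<Rightarrow> bool" where
  "hmor G G' f \<longleftrightarrow> f ` fst G \<subseteq> fst G' \<and> (\<forall>U\<in>snd G. f ` U \<in> snd G')"

definition plays :: "nat \<Rightarrow> 'v set set \<Rightarrow> 'v set list set" where
  "plays k E = {p. p \<noteq> [] \<and> (\<forall>U\<in>set p. U \<in> E \<and> card U \<le> k)}"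

definition fplay :: "nat \<Rightarrow> 'v set set \<Rightarrow> ('v set list \<times> 'v) \<Rightarrow> bool" where
  "fplay k E pa \<longleftrightarrow> fst pa \<in> plays k E \<and> snd pa \<in> last (fst pa)"

text \<open>The equivalence on focussed plays; longest_common_prefix is the meet in the prefix order.\<close>
definition play_rel :: "('v set list \<times> 'v) \<Rightarrow> ('v set list \<times> 'v) \<Rightarrow> bool" where
  "play_rel pa qb \<longleftrightarrow>
     (let p = fst pa; a = snd pa; q = fst qb; b = snd qb; m = longest_common_prefix p q in
       a = b \<and> m \<noteq> [] \<and>
       (\<forall>r. prefix m r \<and> prefix r p \<longrightarrow> a \<in> last r) \<and>
       (\<forall>r. prefix m r \<and> prefix r q \<longrightarrow> a \<in> last r))"

definition cls :: "nat \<Rightarrow> 'v set set \<Rightarrow> ('v set list \<times> 'v) \<Rightarrow> ('v set list \<times> 'v) set" where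
  "cls k E pa = {qb. fplay k E qb \<and> play_rel pa qb}"

definition Hk :: "nat \<Rightarrow> 'v hgraph \<Rightarrow> ('v set list \<times> 'v) set hgraph" where
  "Hk k G =
    ({cls k (snd G) pa | pa. fplay k (snd G) pa},
     {{cls k (snd G) (p, a) | a. a \<in> last p} | p. p \<in> plays k (snd G)})"

definition eps :: "('v set list \<times> 'v) set \<Rightarrow> 'v" where
  "eps x = snd (SOME pa. pa \<in> x)"

definition imgplay :: "nat \<Rightarrow> 'v set set \<Rightarrow> (('v set list \<times> 'v) set \<Rightarrow> 'w) \<Rightarrow> 'v set list \<Rightarrow> 'w set list" where
  "imgplay k E h p =
     map (\<lambda>j. (\<lambda>b. h (cls k E (take (Suc j) p, b))) ` (p ! j)) [0..<length p]"

definition kext :: "nat \<Rightarrow> 'v hgraph \<Rightarrow> 'w hgraph \<Rightarrow> (('v set list \<times> 'v) set \<Rightarrow> 'w)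
                    \<Rightarrow> ('v set list \<times> 'v) set \<Rightarrow> ('w set list \<times> 'w) set" where
  "kext k G G' h x =
     (let pa = (SOME pa. pa \<in> x)
      in cls k (snd G') (imgplay k (snd G) h (fst pa), h (cls k (snd G) pa)))"

end

theory Submission
  imports Defs
begin


lemma lcp_sym: "longest_common_prefix p q = longest_common_prefix q p"
  by (induction p q rule: longest_common_prefix.induct) auto

lemma lcp_iff: "prefix r (longest_common_prefix p q) \<longleftrightarrow> prefix r p \<and> prefix r q"
  by (meson longest_common_prefix_max_prefix longest_common_prefix_prefix1
      longest_common_prefix_prefix2 prefix_order.trans)

lemma lcp_prefix: "prefix r p \<Longrightarrow> longest_common_prefix r p = r"
  by (meson lcp_iff prefix_order.antisym prefix_order.refl longest_common_prefix_prefix1)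

definition pathok :: "'x list \<Rightarrow> 'x list \<Rightarrow> 'y \<Rightarrow> ('x \<Rightarrow> 'y set) \<Rightarrow> bool" where
  "pathok m p a f \<longleftrightarrow> (\<forall>r. prefix m r \<and> prefix r p \<longrightarrow> a \<in> f (last r))"

lemma play_rel_alt: "play_rel (p,a) (q,b) \<longleftrightarrow> a = b \<and> longest_common_prefix p q \<noteq> []
   \<and> pathok (longest_common_prefix p q) p a id \<and> pathok (longest_common_prefix p q) q a id"
  unfolding play_rel_def pathok_def Let_def by auto

lemma play_rel_sym: "play_rel x y \<Longrightarrow> play_rel y x"
  using lcp_sym[of "fst x" "fst y"] by (cases x; cases y) (auto simp: play_rel_alt)

lemma trans_aux:
  assumes "m1 = longest_common_prefix p q" "m2 = longest_common_prefix q s"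
    "m3 = longest_common_prefix p s" "m1 \<noteq> []" "m2 \<noteq> []"
    "pathok m1 p a f" "pathok m2 q a f"
  shows "m3 \<noteq> [] \<and> pathok m3 p a f"
proof
  have m1p: "prefix m1 p" "prefix m1 q" using assms(1) lcp_iff by blast+
  have m2p: "prefix m2 q" "prefix m2 s" using assms(2) lcp_iff by blast+
  have cmp: "prefix m1 m2 \<or> prefix m2 m1" using m1p m2p prefix_same_cases by blast
  show "m3 \<noteq> []"
  proof (cases "prefix m1 m2")
    case True
    then have "prefix m1 m3" using assms(3) lcp_iff m1p m2p prefix_order.trans by blast
    then show ?thesis using assms(4) by auto
  next
    case False
    then have "prefix m2 m1" using cmp by blast
    then have "prefix m2 m3" using assms(3) lcp_iff m1p m2p prefix_order.trans by blast
    then show ?thesis using assms(5) by auto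
  qed
  show "pathok m3 p a f" unfolding pathok_def
  proof (intro allI impI)
    fix r assume r: "prefix m3 r \<and> prefix r p"
    show "a \<in> f (last r)"
    proof (cases "prefix m1 r")
      case True then show ?thesis using assms(6) r unfolding pathok_def by blast
    next
      case False
      then have "prefix r m1" using r m1p prefix_same_cases by blast
      then have rq: "prefix r q" using m1p prefix_order.trans by blast
      show ?thesis
      proof (cases "prefix m2 r")
        case True then show ?thesis using assms(7) r rq unfolding pathok_def by blast
      next
        case False2: False
        then have "prefix r m2" using rq m2p prefix_same_cases by blast
        then have "prefix r s" using m2p prefix_order.trans by blast
        then have "prefix r m3" using r assms(3) lcp_iff by blast
        then have rm3: "r = m3" using r prefix_order.antisym by blast
        show ?thesis
        proof (cases "prefix m1 m2")
          case True
          then have "prefix m1 m3" using assms(3) lcp_iff m1p m2p prefix_order.trans by blast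
          then show ?thesis using False rm3 by blast
        next
          case False3: False
          then have "prefix m2 m1" using cmp by blast
          then have "prefix m2 m3" using assms(3) lcp_iff m1p m2p prefix_order.trans by blast
          then show ?thesis using False2 rm3 by blast
        qed
      qed
    qed
  qed
qed

lemma play_rel_trans: assumes "play_rel x y" "play_rel y z" shows "play_rel x z"
proof -
  obtain p a where x: "x = (p,a)" by (cases x)
  obtain q b where y: "y = (q,b)" by (cases y)
  obtain s c where z: "z = (s,c)" by (cases z)
  have 1: "a = b" "longest_common_prefix p q \<noteq> []"
    "pathok (longest_common_prefix p q) p a id" "pathok (longest_common_prefix p q) q a id"
    using assms(1) x y by (auto simp: play_rel_alt)
  have 2: "b = c" "longest_common_prefix q s \<noteq> []"
    "pathok (longest_common_prefix q s) q a id" "pathok (longest_common_prefix q s) s a id"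
    using assms(2) y z 1 by (auto simp: play_rel_alt)
  have A: "longest_common_prefix p s \<noteq> [] \<and> pathok (longest_common_prefix p s) p a id"
    using trans_aux[OF refl refl refl 1(2) 2(2) 1(3) 2(3)] .
  have B: "longest_common_prefix s p \<noteq> [] \<and> pathok (longest_common_prefix s p) s a id"
  proof -
    have e1: "longest_common_prefix s q = longest_common_prefix q s"
      and e2: "longest_common_prefix q p = longest_common_prefix p q" using lcp_sym by metis+
    show ?thesis using trans_aux[of _ s q _ p, OF refl refl refl] 1(2,4) 2(2,4) unfolding e1 e2 by simp
  qed
  show ?thesis using A B 1(1) 2(1) unfolding x z play_rel_alt lcp_sym[of s p] by simp
qed

lemma play_rel_refl: "fplay k E pa \<Longrightarrow> play_rel pa pa"
  by (cases pa) (auto simp: play_rel_alt pathok_def fplay_def lcp_prefix plays_def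
      dest: prefix_order.antisym)

lemma cls_self: "fplay k E pa \<Longrightarrow> pa \<in> cls k E pa"
  by (simp add: cls_def play_rel_refl)

lemma cls_snd: "qb \<in> cls k E pa \<Longrightarrow> snd qb = snd pa"
  by (cases pa; cases qb) (auto simp: cls_def play_rel_alt)

lemma cls_eq: assumes "play_rel pa qb" shows "cls k E pa = cls k E qb"
  using assms play_rel_sym play_rel_trans unfolding cls_def by blast

lemma cls_mem_eq: "qb \<in> cls k E pa \<Longrightarrow> cls k E qb = cls k E pa \<and> fplay k E qb"
proof -
  assume a: "qb \<in> cls k E pa"
  then have "play_rel pa qb" "fplay k E qb" by (auto simp: cls_def)
  then have "play_rel qb pa" "fplay k E qb" using play_rel_sym by blast+
  then show ?thesis using cls_eq[of qb pa] by blast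
qed

lemma Hk_vert: "x \<in> fst (Hk k G) \<longleftrightarrow> (\<exists>pa. fplay k (snd G) pa \<and> x = cls k (snd G) pa)"
  by (auto simp: Hk_def)

lemma Hk_edge: "U \<in> snd (Hk k G) \<longleftrightarrow> (\<exists>p. p \<in> plays k (snd G) \<and> U = (\<lambda>a. cls k (snd G) (p, a)) ` last p)"
  by (auto simp: Hk_def image_def)

lemma eps_cls: "fplay k E pa \<Longrightarrow> eps (cls k E pa) = snd pa"
  unfolding eps_def by (metis cls_self cls_snd someI)

lemma plays_prefix: "p \<in> plays k E \<Longrightarrow> prefix r p \<Longrightarrow> r \<noteq> [] \<Longrightarrow> r \<in> plays k E"
  by (auto simp: plays_def dest: set_mono_prefix)

lemma cls_prefix:
  assumes "fplay k E (p,a)" "prefix r p" "r \<noteq> []" "\<forall>s. prefix r s \<and> prefix s p \<longrightarrow> a \<in> last s"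
  shows "cls k E (r,a) = cls k E (p,a) \<and> fplay k E (r,a)"
proof -
  have "play_rel (r,a) (p,a)" using assms lcp_prefix[OF assms(2)]
    by (auto simp: play_rel_alt pathok_def dest: prefix_order.trans)
  moreover have "fplay k E (r,a)" using assms plays_prefix
    by (auto simp: fplay_def)
  ultimately show ?thesis using cls_eq by blast
qed

lemma len_imgplay[simp]: "length (imgplay k E h p) = length p"
  by (simp add: imgplay_def)

lemma nth_imgplay: "j < length p \<Longrightarrow> imgplay k E h p ! j = (\<lambda>b. h (cls k E (take (Suc j) p, b))) ` (p ! j)"
  by (simp add: imgplay_def)

lemma take_imgplay: "take n (imgplay k E h p) = imgplay k E h (take n p)"
proof (rule nth_equalityI)
  fix i assume i: "i < length (take n (imgplay k E h p))"
  then have "i < n" "i < length p" by auto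
  then show "take n (imgplay k E h p) ! i = imgplay k E h (take n p) ! i"
    by (simp add: nth_imgplay min_def del: imgplay_def)
qed simp

lemma prefix_imgplay: "prefix r p \<Longrightarrow> prefix (imgplay k E h r) (imgplay k E h p)"
  by (metis prefix_def take_imgplay append_eq_conv_conj len_imgplay take_is_prefix)

lemma last_imgplay: "p \<noteq> [] \<Longrightarrow> last (imgplay k E h p) = (\<lambda>b. h (cls k E (p, b))) ` last p"
proof -
  assume p: "p \<noteq> []"
  then have "imgplay k E h p \<noteq> []" by (metis len_imgplay length_0_conv)
  then have "last (imgplay k E h p) = imgplay k E h p ! (length p - 1)"
    by (simp add: last_conv_nth del: imgplay_def)
  also have "\<dots> = (\<lambda>b. h (cls k E (p, b))) ` (p ! (length p - 1))"
    using p by (simp add: nth_imgplay del: imgplay_def)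
  finally show ?thesis using p by (simp add: last_conv_nth)
qed

lemma imgplay_plays:
  assumes hA: "hypergraph A" and h: "hmor (Hk k A) B h" and p: "p \<in> plays k (snd A)"
  shows "imgplay k (snd A) h p \<in> plays k (snd B)"
  unfolding plays_def
proof (intro CollectI conjI ballI)
  have "p \<noteq> []" using p by (simp add: plays_def)
  then show "imgplay k (snd A) h p \<noteq> []" by (metis len_imgplay length_0_conv)
  fix V assume "V \<in> set (imgplay k (snd A) h p)"
  then obtain j where j: "j < length (imgplay k (snd A) h p)" "V = imgplay k (snd A) h p ! j"
    unfolding in_set_conv_nth by blast
  then have j: "j < length p" "V = imgplay k (snd A) h p ! j" by simp_all
  define t where "t = take (Suc j) p"
  have t: "t \<in> plays k (snd A)" using plays_prefix[OF p, of t] j unfolding t_def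
    by (metis take_is_prefix take_eq_Nil2 Zero_not_Suc less_zeroE length_0_conv)
  have lt: "last t = p ! j" using j by (simp add: t_def take_Suc_conv_app_nth)
  have V: "V = (\<lambda>b. h (cls k (snd A) (t, b))) ` (p ! j)" using j by (simp add: nth_imgplay t_def del: imgplay_def)
  have "(\<lambda>a. cls k (snd A) (t, a)) ` last t \<in> snd (Hk k A)" using t Hk_edge by blast
  then have "h ` (\<lambda>a. cls k (snd A) (t, a)) ` last t \<in> snd B" using h by (auto simp: hmor_def)
  then show "V \<in> snd B" using V lt by (simp add: image_image)
  have pj: "p ! j \<in> snd A" "card (p ! j) \<le> k" using p j by (auto simp: plays_def)
  then have "finite (p ! j)" using hA by (auto simp: hypergraph_def)
  then have "card V \<le> card (p ! j)" using V card_image_le by blast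
  then show "card V \<le> k" using pj by simp
qed

lemma wd_side:
  assumes fp: "fplay k E (p,a)" and m: "prefix m p" "m \<noteq> []" "pathok m p a id"
    and r: "prefix r (imgplay k E h p)" "length m \<le> length r"
  shows "h (cls k E (p,a)) \<in> last r"
proof -
  define t where "t = take (length r) p"
  have "r = take (length r) (imgplay k E h p)" using r(1) by (auto simp: prefix_def)
  then have rt: "r = imgplay k E h t" unfolding t_def take_imgplay .
  have tp: "prefix t p" by (simp add: t_def take_is_prefix)
  have lt: "length t = length r" using rt by simp
  have mt: "prefix m t" using prefix_length_prefix[OF m(1) tp] lt r(2) by simp
  have tne: "t \<noteq> []" using mt m(2) by auto
  have "\<forall>s. prefix t s \<and> prefix s p \<longrightarrow> a \<in> last s"
    using m(3) mt unfolding pathok_def by (auto dest: prefix_order.trans)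
  then have ct: "cls k E (t,a) = cls k E (p,a)" and ft: "fplay k E (t,a)"
    using cls_prefix[OF fp tp tne] by auto
  have "a \<in> last t" using ft by (simp add: fplay_def)
  then have "h (cls k E (t,a)) \<in> (\<lambda>b. h (cls k E (t, b))) ` last t" by (rule imageI)
  then show ?thesis using rt last_imgplay[OF tne, of k E h] ct by simp
qed

lemma wd:
  assumes hA: "hypergraph A" and h: "hmor (Hk k A) B h"
    and fp: "fplay k (snd A) (p,a)" and qb: "(q,b) \<in> cls k (snd A) (p,a)"
  shows "cls k (snd B) (imgplay k (snd A) h q, h (cls k (snd A) (q,b)))
           = cls k (snd B) (imgplay k (snd A) h p, h (cls k (snd A) (p,a)))
        \<and> fplay k (snd B) (imgplay k (snd A) h p, h (cls k (snd A) (p,a)))"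
proof -
  let ?E = "snd A"
  let ?c = "h (cls k ?E (p,a))"
  let ?ip = "imgplay k ?E h p" and ?iq = "imgplay k ?E h q"
  let ?m = "longest_common_prefix p q"
  have ce: "cls k ?E (q,b) = cls k ?E (p,a)" and fq: "fplay k ?E (q,b)"
    using cls_mem_eq[OF qb] by auto
  have pr: "play_rel (p,a) (q,b)" using qb by (simp add: cls_def)
  then have ba: "b = a" and mne: "?m \<noteq> []" and pm: "pathok ?m p a id" and qm: "pathok ?m q a id"
    by (auto simp: play_rel_alt)
  have mp: "prefix ?m p" "prefix ?m q" using lcp_iff by blast+
  have pne: "p \<noteq> []" using mp mne by auto
  have fB: "fplay k (snd B) (?ip, ?c)"
  proof -
    have "?ip \<in> plays k (snd B)" using imgplay_plays[OF hA h] fp by (simp add: fplay_def)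
    moreover have "a \<in> last p" using fp by (simp add: fplay_def)
    then have "?c \<in> last ?ip" using last_imgplay[OF pne, of k ?E h] by simp
    ultimately show ?thesis by (simp add: fplay_def)
  qed
  let ?m' = "longest_common_prefix ?ip ?iq"
  have im: "prefix (imgplay k ?E h ?m) ?m'" using lcp_iff prefix_imgplay mp by blast
  then have len: "length ?m \<le> length ?m'" using prefix_length_le by fastforce
  have "play_rel (?ip, ?c) (?iq, ?c)"
    unfolding play_rel_alt
  proof (intro conjI)
    show "?m' \<noteq> []" using len mne by auto
    show "pathok ?m' ?ip ?c id" unfolding pathok_def
    proof (intro allI impI)
      fix r assume r: "prefix ?m' r \<and> prefix r ?ip"
      then have "length ?m \<le> length r" using len prefix_length_le by fastforce
      then show "?c \<in> id (last r)" using wd_side[OF fp mp(1) mne pm, of r h] r by simp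
    qed
    show "pathok ?m' ?iq ?c id" unfolding pathok_def
    proof (intro allI impI)
      fix r assume r: "prefix ?m' r \<and> prefix r ?iq"
      then have "length ?m \<le> length r" using len prefix_length_le by fastforce
      moreover have "fplay k ?E (q,a)" using fq ba by simp
      ultimately have "h (cls k ?E (q,a)) \<in> last r" using wd_side[OF _ mp(2) mne qm, where r=r and h=h] r by simp
      then show "?c \<in> id (last r)" using ce ba by simp
    qed
  qed simp
  then have "cls k (snd B) (?ip, ?c) = cls k (snd B) (?iq, ?c)" by (rule cls_eq)
  then show ?thesis using fB ce ba by simp
qed

lemma kext_eq:
  assumes hA: "hypergraph A" and h: "hmor (Hk k A) B h"
    and x: "x \<in> fst (Hk k A)" and pa: "pa \<in> x"
  shows "kext k A B h x = cls k (snd B) (imgplay k (snd A) h (fst pa), h (cls k (snd A) pa))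
     \<and> fplay k (snd B) (imgplay k (snd A) h (fst pa), h (cls k (snd A) pa))
     \<and> x = cls k (snd A) pa \<and> fplay k (snd A) pa"
proof -
  from Hk_vert[THEN iffD1, OF x] obtain pa0 where pa0: "fplay k (snd A) pa0" "x = cls k (snd A) pa0" by blast
  have "pa \<in> cls k (snd A) pa0" using pa pa0(2) by simp
  from cls_mem_eq[OF this] have xe: "x = cls k (snd A) pa" and fpa: "fplay k (snd A) pa"
    using pa0(2) by simp_all
  define pb where "pb = (SOME pa. pa \<in> x)"
  have "pb \<in> x" unfolding pb_def using pa by (rule someI)
  obtain q b where qb: "pb = (q,b)" by (cases pb)
  obtain p a where pae: "pa = (p,a)" by (cases pa)
  have pb: "(q,b) \<in> cls k (snd A) (p,a)" using xe qb pae \<open>pb \<in> x\<close> by simp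
  have "kext k A B h x = cls k (snd B) (imgplay k (snd A) h (fst pb), h (cls k (snd A) pb))"
    unfolding kext_def pb_def Let_def by simp
  also have "\<dots> = cls k (snd B) (imgplay k (snd A) h (fst pa), h (cls k (snd A) pa))"
    using wd[OF hA h _ pb] fpa qb pae by simp
  finally show ?thesis using wd[OF hA h _ pb] fpa xe qb pae by simp
qed



lemma L1: assumes hA: "hypergraph A" shows "hypergraph (Hk k A)"
  unfolding hypergraph_def
proof
  fix U assume "U \<in> snd (Hk k A)"
  from Hk_edge[THEN iffD1, OF this] obtain p where p: "p \<in> plays k (snd A)" "U = (\<lambda>a. cls k (snd A) (p, a)) ` last p"
    by blast
  have pne: "p \<noteq> []" using p by (simp add: plays_def)
  then have "last p \<in> snd A" using p by (simp add: plays_def)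
  then have "finite (last p)" using hA by (simp add: hypergraph_def)
  then have "finite U" using p(2) by simp
  moreover have "U \<subseteq> fst (Hk k A)"
  proof
    fix x assume "x \<in> U"
    then obtain a where a: "a \<in> last p" "x = cls k (snd A) (p, a)" using p(2) by blast
    then have "fplay k (snd A) (p,a)" using p(1) by (simp add: fplay_def)
    then show "x \<in> fst (Hk k A)" using a(2) Hk_vert[THEN iffD2] by blast
  qed
  ultimately show "finite U \<and> U \<subseteq> fst (Hk k A)" by blast
qed

lemma L2: assumes hA: "hypergraph A" shows "hmor (Hk k A) A eps"
  unfolding hmor_def
proof (intro conjI ballI subsetI)
  fix y assume "y \<in> eps ` fst (Hk k A)"
  then obtain x where x: "x \<in> fst (Hk k A)" "y = eps x" by blast
  from Hk_vert[THEN iffD1, OF x(1)] obtain pa where pa: "fplay k (snd A) pa" "x = cls k (snd A) pa" by blast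
  then have y: "y = snd pa" using eps_cls x(2) by simp
  have "snd pa \<in> last (fst pa)" "fst pa \<in> plays k (snd A)" using pa(1) by (simp_all add: fplay_def)
  moreover then have "fst pa \<noteq> []" by (simp add: plays_def)
  ultimately have "last (fst pa) \<in> snd A" "snd pa \<in> last (fst pa)" by (simp_all add: plays_def)
  then show "y \<in> fst A" using hA y unfolding hypergraph_def by blast
next
  fix U assume "U \<in> snd (Hk k A)"
  from Hk_edge[THEN iffD1, OF this] obtain p where p: "p \<in> plays k (snd A)" "U = (\<lambda>a. cls k (snd A) (p, a)) ` last p"
    by blast
  have pne: "p \<noteq> []" using p by (simp add: plays_def)
  have "eps ` U = (\<lambda>a. eps (cls k (snd A) (p, a))) ` last p" unfolding p(2) image_image ..
  also have "\<dots> = last p"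
  proof (rule trans[OF image_cong[OF refl] image_ident])
    fix a assume "a \<in> last p"
    then have "fplay k (snd A) (p,a)" using p(1) by (simp add: fplay_def)
    then show "eps (cls k (snd A) (p, a)) = a" using eps_cls by fastforce
  qed
  finally show "eps ` U \<in> snd A" using p pne by (simp add: plays_def)
qed

lemma L3: assumes hA: "hypergraph A" and h: "hmor (Hk k A) B h"
  shows "hmor (Hk k A) (Hk k B) (kext k A B h)"
  unfolding hmor_def
proof (intro conjI ballI subsetI)
  fix y assume "y \<in> kext k A B h ` fst (Hk k A)"
  then obtain x where x: "x \<in> fst (Hk k A)" "y = kext k A B h x" by blast
  from Hk_vert[THEN iffD1, OF x(1)] obtain pa where "fplay k (snd A) pa" "x = cls k (snd A) pa" by blast
  then have "pa \<in> x" using cls_self[of k "snd A" pa] by simp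
  note ke = kext_eq[OF hA h x(1) this]
  have "fplay k (snd B) (imgplay k (snd A) h (fst pa), h (cls k (snd A) pa))"
    using ke by (rule conjunct1[OF conjunct2])
  moreover have "y = cls k (snd B) (imgplay k (snd A) h (fst pa), h (cls k (snd A) pa))"
    using x(2) conjunct1[OF ke] by (rule trans)
  ultimately show "y \<in> fst (Hk k B)" unfolding Hk_vert by blast
next
  fix U assume "U \<in> snd (Hk k A)"
  from Hk_edge[THEN iffD1, OF this] obtain p where p: "p \<in> plays k (snd A)" "U = (\<lambda>a. cls k (snd A) (p, a)) ` last p"
    by blast
  have pne: "p \<noteq> []" using p by (simp add: plays_def)
  have ip: "imgplay k (snd A) h p \<in> plays k (snd B)" using imgplay_plays[OF hA h p(1)] .
  have "kext k A B h ` U = (\<lambda>a. cls k (snd B) (imgplay k (snd A) h p, h (cls k (snd A) (p,a)))) ` last p"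
    unfolding p(2) image_image
  proof (rule image_cong[OF refl])
    fix a assume a: "a \<in> last p"
    then have f: "fplay k (snd A) (p,a)" using p by (simp add: fplay_def)
    then have "cls k (snd A) (p,a) \<in> fst (Hk k A)" unfolding Hk_vert by blast
    from conjunct1[OF kext_eq[OF hA h this cls_self[OF f]]]
    show "kext k A B h (cls k (snd A) (p, a)) = cls k (snd B) (imgplay k (snd A) h p, h (cls k (snd A) (p, a)))"
      by simp
  qed
  also have "\<dots> = (\<lambda>c. cls k (snd B) (imgplay k (snd A) h p, c)) ` last (imgplay k (snd A) h p)"
    unfolding last_imgplay[OF pne] image_image ..
  finally show "kext k A B h ` U \<in> snd (Hk k B)" unfolding Hk_edge using ip by blast
qed

lemma L4: assumes hA: "hypergraph A" and h: "hmor (Hk k A) B h" and x: "x \<in> fst (Hk k A)"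
  shows "eps (kext k A B h x) = h x"
proof -
  from Hk_vert[THEN iffD1, OF x] obtain pa where pa: "fplay k (snd A) pa" "x = cls k (snd A) pa" by blast
  then have "pa \<in> x" using cls_self[of k "snd A" pa] by simp
  note ke = kext_eq[OF hA h x this]
  have "eps (kext k A B h x) = eps (cls k (snd B) (imgplay k (snd A) h (fst pa), h (cls k (snd A) pa)))"
    using conjunct1[OF ke] by (rule arg_cong)
  also have "\<dots> = h (cls k (snd A) pa)" using eps_cls[OF conjunct1[OF conjunct2[OF ke]]] by simp
  finally show ?thesis using pa(2) by simp
qed

lemma imgplay_eps: assumes "p \<in> plays k E" shows "imgplay k E eps p = p"
proof (rule nth_equalityI)
  fix j assume "j < length (imgplay k E eps p)"
  then have j: "j < length p" by simp
  have t: "take (Suc j) p \<in> plays k E" using plays_prefix[OF assms, of "take (Suc j) p"] j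
    by (metis take_is_prefix take_eq_Nil2 Zero_not_Suc less_zeroE length_0_conv)
  have lt: "last (take (Suc j) p) = p ! j" using j by (simp add: take_Suc_conv_app_nth)
  have "(\<lambda>b. eps (cls k E (take (Suc j) p, b))) ` (p ! j) = p ! j"
  proof (rule trans[OF image_cong[OF refl] image_ident])
    fix b assume "b \<in> p ! j"
    then have "fplay k E (take (Suc j) p, b)" using t lt by (simp add: fplay_def)
    from eps_cls[OF this] show "eps (cls k E (take (Suc j) p, b)) = b" by simp
  qed
  then show "imgplay k E eps p ! j = p ! j" using j by (simp add: nth_imgplay del: imgplay_def)
qed simp

lemma L5: assumes hA: "hypergraph A" and x: "x \<in> fst (Hk k A)"
  shows "kext k A A eps x = x"
proof -
  from Hk_vert[THEN iffD1, OF x] obtain pa where f: "fplay k (snd A) pa" "x = cls k (snd A) pa" by blast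
  then have "pa \<in> x" using cls_self[of k "snd A" pa] by simp
  from conjunct1[OF kext_eq[OF hA L2[OF hA] x this]]
  have "kext k A A eps x = cls k (snd A) (imgplay k (snd A) eps (fst pa), eps (cls k (snd A) pa))" .
  also have "imgplay k (snd A) eps (fst pa) = fst pa" using f(1) unfolding fplay_def by (intro imgplay_eps) blast
  also have "eps (cls k (snd A) pa) = snd pa" using eps_cls[OF f(1)] .
  finally show ?thesis using f(2) by simp
qed

lemma hmor_comp: "hmor G1 G2 f \<Longrightarrow> hmor G2 G3 g \<Longrightarrow> hmor G1 G3 (g \<circ> f)"
  unfolding hmor_def comp_def
proof (intro conjI ballI)
  assume a: "f ` fst G1 \<subseteq> fst G2 \<and> (\<forall>U\<in>snd G1. f ` U \<in> snd G2)"
     and b: "g ` fst G2 \<subseteq> fst G3 \<and> (\<forall>U\<in>snd G2. g ` U \<in> snd G3)"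
  show "(\<lambda>x. g (f x)) ` fst G1 \<subseteq> fst G3" using a b by blast
  fix U assume "U \<in> snd G1"
  then have "g ` (f ` U) \<in> snd G3" using a b by blast
  then show "(\<lambda>x. g (f x)) ` U \<in> snd G3" by (simp add: image_image)
qed

lemma imgplay_comp:
  assumes hA: "hypergraph A" and h: "hmor (Hk k A) B h" and p: "p \<in> plays k (snd A)"
  shows "imgplay k (snd A) (g \<circ> kext k A B h) p = imgplay k (snd B) g (imgplay k (snd A) h p)"
proof (rule nth_equalityI)
  fix j assume "j < length (imgplay k (snd A) (g \<circ> kext k A B h) p)"
  then have j: "j < length p" by simp
  define t where "t = take (Suc j) p"
  have t: "t \<in> plays k (snd A)" using plays_prefix[OF p, of t] j unfolding t_def
    by (metis take_is_prefix take_eq_Nil2 Zero_not_Suc less_zeroE length_0_conv)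
  have lt: "last t = p ! j" using j by (simp add: take_Suc_conv_app_nth t_def)
  have "imgplay k (snd A) (g \<circ> kext k A B h) p ! j = (\<lambda>b. (g \<circ> kext k A B h) (cls k (snd A) (t, b))) ` (p ! j)"
    using j by (simp add: nth_imgplay t_def del: imgplay_def)
  also have "\<dots> = (\<lambda>b. g (cls k (snd B) (imgplay k (snd A) h t, h (cls k (snd A) (t,b))))) ` (p ! j)"
  proof (rule image_cong[OF refl])
    fix b assume "b \<in> p ! j"
    then have f: "fplay k (snd A) (t, b)" using t lt by (simp add: fplay_def)
    then have "cls k (snd A) (t,b) \<in> fst (Hk k A)" unfolding Hk_vert by blast
    from conjunct1[OF kext_eq[OF hA h this cls_self[OF f]]]
    show "(g \<circ> kext k A B h) (cls k (snd A) (t, b)) = g (cls k (snd B) (imgplay k (snd A) h t, h (cls k (snd A) (t,b))))"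
      by simp
  qed
  also have "\<dots> = (\<lambda>c. g (cls k (snd B) (imgplay k (snd A) h t, c))) ` ((\<lambda>b. h (cls k (snd A) (t,b))) ` (p ! j))"
    by (simp only: image_image)
  also have "\<dots> = imgplay k (snd B) g (imgplay k (snd A) h p) ! j"
    using j by (simp add: nth_imgplay take_imgplay t_def del: imgplay_def)
  finally show "imgplay k (snd A) (g \<circ> kext k A B h) p ! j = imgplay k (snd B) g (imgplay k (snd A) h p) ! j" .
qed simp

lemma L6:
  assumes hA: "hypergraph A" and hB: "hypergraph B" and h: "hmor (Hk k A) B h"
    and g: "hmor (Hk k B) C g" and x: "x \<in> fst (Hk k A)"
  shows "kext k A C (g \<circ> kext k A B h) x = kext k B C g (kext k A B h x)"
proof -
  from Hk_vert[THEN iffD1, OF x] obtain pa where f: "fplay k (snd A) pa" "x = cls k (snd A) pa" by blast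
  then have pax: "pa \<in> x" using cls_self[of k "snd A" pa] by simp
  have gh: "hmor (Hk k A) C (g \<circ> kext k A B h)" using hmor_comp[OF L3[OF hA h] g] .
  have pp: "fst pa \<in> plays k (snd A)" using f(1) by (simp add: fplay_def)
  note ke = kext_eq[OF hA h x pax]
  define y where "y = cls k (snd B) (imgplay k (snd A) h (fst pa), h (cls k (snd A) pa))"
  have ky: "kext k A B h x = y" using conjunct1[OF ke] unfolding y_def .
  have fy: "fplay k (snd B) (imgplay k (snd A) h (fst pa), h (cls k (snd A) pa))"
    using conjunct1[OF conjunct2[OF ke]] .
  then have yv: "y \<in> fst (Hk k B)" unfolding Hk_vert y_def by blast
  have yin: "(imgplay k (snd A) h (fst pa), h (cls k (snd A) pa)) \<in> y" unfolding y_def using cls_self[OF fy] .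
  have "kext k A C (g \<circ> kext k A B h) x
     = cls k (snd C) (imgplay k (snd A) (g \<circ> kext k A B h) (fst pa), (g \<circ> kext k A B h) (cls k (snd A) pa))"
    using conjunct1[OF kext_eq[OF hA gh x pax]] .
  also have "\<dots> = cls k (snd C) (imgplay k (snd B) g (imgplay k (snd A) h (fst pa)), g y)"
    using imgplay_comp[OF hA h pp, of g] ky f(2) by simp
  also have "\<dots> = kext k B C g y"
    using conjunct1[OF kext_eq[OF hB g yv yin]] y_def by simp
  finally show ?thesis using ky by simp
qed


theorem theorem6p2:
  fixes k :: nat
    and A :: "'a hgraph" and B :: "'b hgraph" and C :: "'c hgraph"
  assumes "k > 0"
    and "hypergraph A" and "hypergraph B" and "hypergraph C"
  shows
    "hypergraph (Hk k A)
     \<and> hmor (Hk k A) A eps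
     \<and> (\<forall>h. hmor (Hk k A) B h \<longrightarrow>
          hmor (Hk k A) (Hk k B) (kext k A B h)
          \<and> (\<forall>x\<in>fst (Hk k A). \<forall>pa\<in>x.
                kext k A B h x = cls k (snd B) (imgplay k (snd A) h (fst pa), h (cls k (snd A) pa)))
          \<and> (\<forall>x\<in>fst (Hk k A). eps (kext k A B h x) = h x))
     \<and> (\<forall>x\<in>fst (Hk k A). kext k A A eps x = x)
     \<and> (\<forall>h g. hmor (Hk k A) B h \<longrightarrow> hmor (Hk k B) C g \<longrightarrow>
          (\<forall>x\<in>fst (Hk k A). kext k A C (g \<circ> kext k A B h) x = kext k B C g (kext k A B h x)))"
proof -
  have hA: "hypergraph A" and hB: "hypergraph B" using assms by simp_all
  have P3: "\<forall>h. hmor (Hk k A) B h \<longrightarrow>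
          hmor (Hk k A) (Hk k B) (kext k A B h)
          \<and> (\<forall>x\<in>fst (Hk k A). \<forall>pa\<in>x.
                kext k A B h x = cls k (snd B) (imgplay k (snd A) h (fst pa), h (cls k (snd A) pa)))
          \<and> (\<forall>x\<in>fst (Hk k A). eps (kext k A B h x) = h x)"
  proof (intro allI impI conjI ballI)
    fix h assume h: "hmor (Hk k A) B h"
    show "hmor (Hk k A) (Hk k B) (kext k A B h)" using L3[OF hA h] .
    fix x assume x: "x \<in> fst (Hk k A)"
    show "eps (kext k A B h x) = h x" using L4[OF hA h x] .
    fix pa assume pa: "pa \<in> x"
    show "kext k A B h x = cls k (snd B) (imgplay k (snd A) h (fst pa), h (cls k (snd A) pa))"
      using conjunct1[OF kext_eq[OF hA h x pa]] .
  qed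
  have P5: "\<forall>h g. hmor (Hk k A) B h \<longrightarrow> hmor (Hk k B) C g \<longrightarrow>
          (\<forall>x\<in>fst (Hk k A). kext k A C (g \<circ> kext k A B h) x = kext k B C g (kext k A B h x))"
    using L6[OF hA hB] by blast
  show ?thesis using L1[OF hA] L2[OF hA] P3 L5[OF hA] P5 by blast
qed

end
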